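(* Let $K\ge1$, fix $t_1,t_2\in\mathbb C$, and let $M\in\mathcal M$. If $D(M)<2K^2-3K$ then $\det M=0$. If $D(M)=2K^2-3K$ and $\det M\ne0$, then the column degrees $D_1(M),\dots,D_{2K}(M)$ are, in some order, exactly the distinct values $-1,0,1,\dots,2K-2$.
   Context: For integers $r$ and nonnegative integers $E,G$ define \[ I(r,E,G)=\frac{1}{2\pi i}\oint_{|u|=2}\frac{u^r\exp\left(\frac{t_1}{u-1}+\frac{t_2}{u+1}\right)}{(u-1)^E(u+1)^G}\,du \] (positively oriented circle). Let $\mathcal M=\mathcal M_{2K}$ be the set of $2K\times 2K$ matrices $M=(M_{i,j})$ with $M_{i,j}=I(c_j+r_i,E_j,G_j)$, where $r_1,\dots,r_{2K},c_1,\dots,c_{2K}\in\mathbb Z$ and $E_j,G_j$ are nonnegative integers. The degree of the entry $M_{i,j}$ is $d_{i,j}=c_j+r_i-E_j-G_j$, the degree of column $J$ is $D_J(M)=\max_i d_{i,J}$, and the total degree is $D(M)=\sum_{J=1}^{2K}D_J(M)$. *)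

theory Defs
  imports "HOL-Complex_Analysis.Complex_Analysis" "Jordan_Normal_Form.Determinant"
begin

definition Iint :: "complex \<Rightarrow> complex \<Rightarrow> int \<Rightarrow> nat \<Rightarrow> nat \<Rightarrow> complex" where
  "Iint t1 t2 r E G = contour_integral (circlepath 0 2)
     (\<lambda>u. u powi r * exp (t1 / (u - 1) + t2 / (u + 1)) / ((u - 1) ^ E * (u + 1) ^ G))
     / (2 * of_real pi * \<i>)"

definition Mmat :: "complex \<Rightarrow> complex \<Rightarrow> nat \<Rightarrow> (nat \<Rightarrow> int) \<Rightarrow> (nat \<Rightarrow> int)
    \<Rightarrow> (nat \<Rightarrow> nat) \<Rightarrow> (nat \<Rightarrow> nat) \<Rightarrow> complex mat" where
  "Mmat t1 t2 n r c E G = mat n n (\<lambda>(i, j). Iint t1 t2 (c j + r i) (E j) (G j))"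

definition entryDeg :: "(nat \<Rightarrow> int) \<Rightarrow> (nat \<Rightarrow> int) \<Rightarrow> (nat \<Rightarrow> nat) \<Rightarrow> (nat \<Rightarrow> nat) \<Rightarrow> nat \<Rightarrow> nat \<Rightarrow> int" where
  "entryDeg r c E G i j = c j + r i - int (E j) - int (G j)"

definition colDeg :: "nat \<Rightarrow> (nat \<Rightarrow> int) \<Rightarrow> (nat \<Rightarrow> int) \<Rightarrow> (nat \<Rightarrow> nat) \<Rightarrow> (nat \<Rightarrow> nat) \<Rightarrow> nat \<Rightarrow> int" where
  "colDeg n r c E G j = Max ((\<lambda>i. entryDeg r c E G i j) ` {0..<n})"

definition totDeg :: "nat \<Rightarrow> (nat \<Rightarrow> int) \<Rightarrow> (nat \<Rightarrow> int) \<Rightarrow> (nat \<Rightarrow> nat) \<Rightarrow> (nat \<Rightarrow> nat) \<Rightarrow> int" where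
  "totDeg n r c E G = (\<Sum>j<n. colDeg n r c E G j)"

end

theory Submission
  imports Defs
begin

lemma seg_sub:
  assumes "R \<ge> 2"
  shows "closed_segment (circlepath 0 R t) (circlepath 0 2 t) \<subseteq> {u. 1 < cmod u}"
proof
  fix x assume "x \<in> closed_segment (circlepath 0 R t) (circlepath 0 2 t)"
  then obtain s where s: "0 \<le> s" "s \<le> 1" and x: "x = (1 - s) *\<^sub>R circlepath 0 R t + s *\<^sub>R circlepath 0 2 t"
    unfolding closed_segment_def by auto
  define e where "e = exp (2 * of_real pi * \<i> * of_real t)"
  have ne: "cmod e = 1" unfolding e_def
    by (metis mult.commute mult.left_commute norm_exp_i_times of_real_mult of_real_numeral)
  have "x = complex_of_real ((1 - s) * R + s * 2) * e"
    unfolding x circlepath e_def by (simp add: scaleR_conv_of_real algebra_simps)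
  then have "cmod x = \<bar>(1 - s) * R + s * 2\<bar>" using ne by (metis norm_mult norm_of_real mult_1_right)
  also have "\<dots> = (1 - s) * R + s * 2" using s assms by simp
  also have "\<dots> \<ge> 2"
  proof -
    have h: "(1-s)*2 \<le> (1-s)*R" using s assms by (intro mult_left_mono) auto
    have "2 = (1-s)*2 + s*2" by (simp add: algebra_simps)
    also have "\<dots> \<le> (1-s)*R + s*2" using h by simp
    finally show ?thesis .
  qed
  finally show "x \<in> {u. 1 < cmod u}" by simp
qed

lemma Iint_zero_aux:
  fixes t1 t2 :: complex and r :: int and E G :: nat
  assumes deg: "r + 2 \<le> int E + int G"
  shows "contour_integral (circlepath 0 2)
     (\<lambda>u. u powi r * exp (t1 / (u - 1) + t2 / (u + 1)) / ((u - 1) ^ E * (u + 1) ^ G)) = 0"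
proof -
  define f where "f = (\<lambda>u::complex. u powi r * exp (t1 / (u - 1) + t2 / (u + 1)) / ((u - 1) ^ E * (u + 1) ^ G))"
  define S where "S = {u::complex. 1 < cmod u}"
  have oS: "open S" unfolding S_def by (intro open_Collect_less continuous_intros)
  have nz: "u \<noteq> 0" "u - 1 \<noteq> 0" "u + 1 \<noteq> 0" if "u \<in> S" for u
  proof -
    have "u \<noteq> -1" using that unfolding S_def by auto
    then show "u + 1 \<noteq> 0" by (simp add: add_eq_0_iff2)
    show "u \<noteq> 0" "u - 1 \<noteq> 0" using that unfolding S_def by auto
  qed
  have hol: "f holomorphic_on S" unfolding f_def
    using nz by (intro holomorphic_intros holomorphic_on_power_int) auto
  have eq: "contour_integral (circlepath 0 R) f = contour_integral (circlepath 0 2) f" if R: "R \<ge> 2" for R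
    by (rule Cauchy_theorem_homotopic_loops[OF homotopic_loops_linear oS hol])
       (use seg_sub[OF R] in \<open>auto simp: S_def\<close>)
  define n where "n = E + G"
  define A where "A = exp (cmod t1 + cmod t2)"
  have bnd: "cmod (f u) \<le> A * 2 ^ n / R ^ 2" if R: "R \<ge> 4" and u: "cmod u = R" for R u
  proof -
    have a1: "cmod (u - 1) \<ge> R / 2" using norm_triangle_ineq2[of u 1] R u by simp
    have a2: "cmod (u + 1) \<ge> R / 2" using norm_triangle_ineq2[of u "-1"] R u by simp
    have b1: "cmod (u - 1) \<ge> 1" "cmod (u + 1) \<ge> 1" using a1 a2 R by auto
    have "cmod (t1 / (u - 1)) \<le> cmod t1" using b1
      by (simp add: norm_divide divide_le_eq mult_le_cancel_left1 mult_left_mono)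
    moreover have "cmod (t2 / (u + 1)) \<le> cmod t2" using b1
      by (simp add: norm_divide divide_le_eq mult_le_cancel_left1 mult_left_mono)
    ultimately have "cmod (t1 / (u - 1) + t2 / (u + 1)) \<le> cmod t1 + cmod t2"
      by (smt (verit) norm_triangle_ineq)
    then have ex: "cmod (exp (t1 / (u - 1) + t2 / (u + 1))) \<le> A"
      unfolding A_def norm_exp_eq_Re
      by (smt (verit) abs_Re_le_cmod exp_le_cancel_iff)
    have "(R / 2) ^ E * (R / 2) ^ G \<le> cmod ((u - 1) ^ E * (u + 1) ^ G)"
      unfolding norm_mult norm_power using a1 a2 R
      by (intro mult_mono power_mono) auto
    then have den: "R ^ n / 2 ^ n \<le> cmod ((u - 1) ^ E * (u + 1) ^ G)"
      by (simp add: n_def power_add power_divide)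
    have Rpos: "R > 0" using R by simp
    have "cmod (u powi r) = R powi r" by (simp add: norm_power_int u)
    also have "\<dots> \<le> R powi (int n - 2)" using R deg by (intro power_int_increasing) (auto simp: n_def)
    also have "\<dots> = R ^ n / R ^ 2" using Rpos by (simp add: power_int_diff)
    finally have num: "cmod (u powi r) \<le> R ^ n / R ^ 2" .
    have "cmod (f u) = cmod (u powi r) * cmod (exp (t1 / (u - 1) + t2 / (u + 1))) / cmod ((u - 1) ^ E * (u + 1) ^ G)"
      unfolding f_def by (simp add: norm_mult norm_divide)
    also have "\<dots> \<le> (R ^ n / R ^ 2) * A / (R ^ n / 2 ^ n)"
      using num ex den Rpos by (intro frac_le mult_mono) (auto simp: A_def)
    also have "\<dots> = A * 2 ^ n / R ^ 2" using Rpos by (simp add: field_simps)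
    finally show ?thesis .
  qed
  define I0 where "I0 = contour_integral (circlepath 0 2) f"
  define C where "C = A * 2 ^ n * 2 * pi"
  have Cpos: "C > 0" unfolding C_def A_def by simp
  have le: "cmod I0 \<le> C / R" if R: "R \<ge> 4" for R
  proof -
    have sub: "path_image (circlepath 0 R) \<subseteq> S" using R by (auto simp: S_def)
    have "f contour_integrable_on circlepath 0 R"
      by (rule contour_integrable_continuous_circlepath)
         (rule continuous_on_subset[OF holomorphic_on_imp_continuous_on[OF hol] sub])
    moreover have "R \<ge> 2" using R by simp
    ultimately have hi: "(f has_contour_integral I0) (circlepath 0 R)"
      using eq unfolding I0_def by (metis has_contour_integral_integral)
    have "cmod I0 \<le> (A * 2 ^ n / R ^ 2) * (2 * pi * R)"
      by (rule has_contour_integral_bound_circlepath[OF hi]) (use R bnd in \<open>auto simp: A_def\<close>)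
    also have "\<dots> = C / R" using R by (simp add: C_def power2_eq_square field_simps)
    finally show ?thesis .
  qed
  have "I0 = 0"
  proof (rule ccontr)
    assume "I0 \<noteq> 0"
    then have p: "cmod I0 > 0" by simp
    define R where "R = max 4 (2 * C / cmod I0)"
    have "cmod I0 \<le> C / R" using le[of R] by (simp add: R_def)
    moreover have "C / R < cmod I0"
    proof -
      have R0: "R > 0" "R \<ge> 2 * C / cmod I0" by (auto simp: R_def)
      then have "C / R \<le> C / (2 * C / cmod I0)" using Cpos p
        by (intro divide_left_mono) auto
      also have "\<dots> = cmod I0 / 2" using Cpos by simp
      finally have "C / R \<le> cmod I0 / 2" .
      then show ?thesis using p by linarith
    qed
    ultimately show False by simp
  qed
  then show ?thesis unfolding I0_def f_def .
qed

lemma Iint_zero: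
  assumes "r + 2 \<le> int E + int G"
  shows "Iint t1 t2 r E G = 0"
  unfolding Iint_def using Iint_zero_aux[OF assms] by simp

lemma sum_distinct_nat:
  fixes T :: "nat set"
  assumes "finite T" "card T = n"
  shows "(\<Sum>{0..<n}) \<le> \<Sum>T \<and> (\<Sum>T = \<Sum>{0..<n} \<longrightarrow> T = {0..<n})"
  using assms
proof (induction n arbitrary: T)
  case 0
  then show ?case by auto
next
  case (Suc n)
  then have ne: "T \<noteq> {}" by auto
  define m where "m = Max T"
  have mT: "m \<in> T" using Suc.prems ne unfolding m_def by simp
  define T' where "T' = T - {m}"
  have fT': "finite T'" "card T' = n" using Suc.prems mT unfolding T'_def by auto
  note IH = Suc.IH[OF fT']
  have "T \<subseteq> {0..m}" using Suc.prems unfolding m_def by auto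
  then have "card T \<le> card {0..m}" by (intro card_mono) auto
  then have mn: "n \<le> m" using Suc.prems by simp
  have sT: "\<Sum>T = m + \<Sum>T'" unfolding T'_def using Suc.prems mT by (simp add: sum.remove)
  have s2: "\<Sum>{0..<Suc n} = \<Sum>{0..<n} + n" by simp
  have "(\<Sum>{0..<Suc n}) \<le> \<Sum>T" using IH mn sT s2 by linarith
  moreover have "T = {0..<Suc n}" if "\<Sum>T = \<Sum>{0..<Suc n}"
  proof -
    have "m = n" "\<Sum>T' = \<Sum>{0..<n}" using IH mn sT s2 that by linarith+
    then have "T' = {0..<n}" using IH by simp
    then have "T = insert n {0..<n}" using mT \<open>m = n\<close> unfolding T'_def by auto
    then show ?thesis by auto
  qed
  ultimately show ?case by blast
qed

lemma gauss2: "2 * (\<Sum>{0..<n::nat}) = n * (n - 1)"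
proof (induction n)
  case 0
  then show ?case by simp
next
  case (Suc n)
  have "2 * (\<Sum>{0..<Suc n}) = n * (n - 1) + 2 * n" using Suc by simp
  also have "\<dots> = Suc n * (Suc n - 1)" by (cases n) (simp_all add: algebra_simps)
  finally show ?case .
qed

lemma key:
  fixes K :: nat and t1 t2 :: complex
    and r c :: "nat \<Rightarrow> int" and E G :: "nat \<Rightarrow> nat"
  assumes K: "K \<ge> 1" and injr: "inj_on r {0..<2*K}"
    and dt: "det (Mmat t1 t2 (2*K) r c E G) \<noteq> 0"
  shows "totDeg (2*K) r c E G \<ge> 2 * int K ^ 2 - 3 * int K"
    and "totDeg (2*K) r c E G = 2 * int K ^ 2 - 3 * int K
            \<Longrightarrow> bij_betw (colDeg (2*K) r c E G) {0..<2*K} {-1 .. 2 * int K - 2}"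
proof -
  define n where "n = 2*K"
  define M where "M = Mmat t1 t2 n r c E G"
  have Mc: "M \<in> carrier_mat n n" unfolding M_def Mmat_def by simp
  have "(\<Sum> p \<in> {p. p permutes {0 ..< n}}. signof p * (\<Prod> i = 0 ..< n. M $$ (i, p i))) \<noteq> 0"
    using dt det_def'[OF Mc] unfolding M_def n_def by simp
  then obtain p where pp0: "p \<in> {p. p permutes {0..<n}}"
      and pr0: "signof p * (\<Prod> i = 0 ..< n. M $$ (i, p i)) \<noteq> 0"
    by (rule sum.not_neutral_contains_not_neutral)
  have pp: "p permutes {0..<n}" using pp0 by simp
  have pr: "(\<Prod> i = 0 ..< n. M $$ (i, p i)) \<noteq> 0" using pr0 by auto
  have ent: "entryDeg r c E G i (p i) \<ge> -1" if i: "i < n" for i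
  proof -
    have "M $$ (i, p i) \<noteq> 0" using pr i by auto
    moreover have "p i < n" using pp i by (simp add: permutes_in_image)
    ultimately have "Iint t1 t2 (c (p i) + r i) (E (p i)) (G (p i)) \<noteq> 0"
      using i unfolding M_def Mmat_def by simp
    then have "\<not> (c (p i) + r i + 2 \<le> int (E (p i)) + int (G (p i)))" using Iint_zero by blast
    then show ?thesis unfolding entryDeg_def by simp
  qed
  define q where "q = inv_into UNIV p"
  have qp: "q permutes {0..<n}" unfolding q_def using pp by (rule permutes_inv)
  have pq: "p (q j) = j" for j unfolding q_def using pp by (simp add: permutes_inverses)
  have qlt: "q j < n" if "j < n" for j using qp that by (simp add: permutes_in_image)
  have ent2: "entryDeg r c E G (q j) j \<ge> -1" if "j < n" for j
    using ent[OF qlt[OF that]] by (simp add: pq)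
  have n0: "n > 0" using K unfolding n_def by simp
  define R where "R = Max (r ` {0..<n})"
  have Rge: "r i \<le> R" if "i < n" for i unfolding R_def using that by simp
  have "R \<in> r ` {0..<n}" unfolding R_def using n0 by (intro Max_in) auto
  then obtain i0 where i0: "i0 < n" "r i0 = R" by auto
  define t where "t j = nat (R - r (q j))" for j
  have tint: "int (t j) = R - r (q j)" if "j < n" for j
    unfolding t_def using Rge[OF qlt[OF that]] by simp
  have cge: "colDeg n r c E G j \<ge> int (t j) - 1" if j: "j < n" for j
  proof -
    have "colDeg n r c E G j \<ge> entryDeg r c E G i0 j" unfolding colDeg_def using i0 by simp
    then show ?thesis using ent2[OF j] tint[OF j] i0 unfolding entryDeg_def by simp
  qed
  have tinj: "inj_on t {0..<n}"
  proof (rule inj_onI)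
    fix x y assume xy: "x \<in> {0..<n}" "y \<in> {0..<n}" "t x = t y"
    have x: "x < n" and y: "y < n" using xy(1,2) by auto
    have "int (t x) = int (t y)" using xy(3) by simp
    then have "r (q x) = r (q y)" using tint[OF x] tint[OF y] by simp
    moreover have "q x \<in> {0..<2*K}" "q y \<in> {0..<2*K}" using qlt[OF x] qlt[OF y] unfolding n_def by auto
    ultimately have "q x = q y" using inj_onD[OF injr] by blast
    then have "p (q x) = p (q y)" by simp
    then show "x = y" by (simp add: pq)
  qed
  define T where "T = t ` {0..<n}"
  have fT: "finite T" "card T = n" unfolding T_def using tinj by (auto simp: card_image)
  note L = sum_distinct_nat[OF fT]
  have sumT: "(\<Sum>j<n. int (t j)) = int (\<Sum>T)"
    unfolding T_def using tinj by (simp add: sum.reindex lessThan_atLeast0)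
  have g: "int (\<Sum>{0..<n}) - int n = 2 * int K ^ 2 - 3 * int K"
  proof -
    have "int (2 * \<Sum>{0..<n}) = int (n * (n - 1))" using gauss2[of n] by (simp only:)
    then have "2 * int (\<Sum>{0..<n}) = int n * (int n - 1)" using n0 by (simp add: of_nat_diff)
    then show ?thesis unfolding n_def by (simp add: power2_eq_square algebra_simps)
  qed
  have td: "totDeg n r c E G = (\<Sum>j<n. colDeg n r c E G j)" unfolding totDeg_def ..
  have lower: "(\<Sum>j<n. int (t j) - 1) \<le> totDeg n r c E G"
    unfolding td using cge by (intro sum_mono) auto
  have lower2: "(\<Sum>j<n. int (t j) - 1) = int (\<Sum>T) - int n"
    using sumT by (simp add: sum_subtractf)
  have "\<Sum>{0..<n} \<le> \<Sum>T" using L by blast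
  then have LT: "int (\<Sum>{0..<n}) \<le> int (\<Sum>T)" by (simp only: of_nat_le_iff)
  show "totDeg (2*K) r c E G \<ge> 2 * int K ^ 2 - 3 * int K"
    using lower lower2 LT g unfolding n_def by linarith
  assume eq: "totDeg (2*K) r c E G = 2 * int K ^ 2 - 3 * int K"
  have sT: "\<Sum>T = \<Sum>{0..<n}" using lower lower2 LT g eq unfolding n_def by linarith
  then have Tn: "T = {0..<n}" using L by simp
  have sTi: "int (\<Sum>T) = int (\<Sum>{0..<n})" using sT by (simp only:)
  have "(\<Sum>j<n. colDeg n r c E G j - (int (t j) - 1)) = totDeg n r c E G - (\<Sum>j<n. int (t j) - 1)"
    unfolding td by (simp only: sum_subtractf)
  also have "\<dots> = 0" using lower2 sTi g eq unfolding n_def by linarith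
  finally have "(\<Sum>j<n. colDeg n r c E G j - (int (t j) - 1)) = 0" .
  moreover have "\<forall>j\<in>{..<n}. colDeg n r c E G j - (int (t j) - 1) \<ge> 0" using cge by simp
  ultimately have z: "\<forall>j\<in>{..<n}. colDeg n r c E G j - (int (t j) - 1) = 0"
    using sum_nonneg_eq_0_iff[of "{..<n}" "\<lambda>j. colDeg n r c E G j - (int (t j) - 1)"] by blast
  have cd: "colDeg n r c E G j = int (t j) - 1" if "j < n" for j
    using z that by simp
  have bt: "bij_betw t {0..<n} {0..<n}" using tinj Tn unfolding T_def bij_betw_def by simp
  have bs: "bij_betw (\<lambda>x::nat. int x - 1) {0..<n} {-1 .. int n - 2}"
  proof (rule bij_betw_imageI)
    show "inj_on (\<lambda>x::nat. int x - 1) {0..<n}" by (auto simp: inj_on_def)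
    show "(\<lambda>x::nat. int x - 1) ` {0..<n} = {-1 .. int n - 2}"
    proof (intro equalityI subsetI)
      fix y assume "y \<in> (\<lambda>x::nat. int x - 1) ` {0..<n}" then show "y \<in> {-1 .. int n - 2}" by auto
    next
      fix y assume y: "y \<in> {-1 .. int n - 2}"
      then have "y = int (nat (y + 1)) - 1" "nat (y + 1) \<in> {0..<n}" by auto
      then show "y \<in> (\<lambda>x::nat. int x - 1) ` {0..<n}" by (metis image_eqI)
    qed
  qed
  have "bij_betw ((\<lambda>x::nat. int x - 1) \<circ> t) {0..<n} {-1 .. int n - 2}"
    by (rule bij_betw_trans[OF bt bs])
  then have "bij_betw (colDeg n r c E G) {0..<n} {-1 .. int n - 2}"
    by (rule bij_betw_cong[THEN iffD1, rotated]) (auto simp: cd)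
  then show "bij_betw (colDeg (2*K) r c E G) {0..<2*K} {-1 .. 2 * int K - 2}"
    unfolding n_def by simp
qed

theorem mainTheorem7:
  fixes K :: nat and t1 t2 :: complex
    and r c :: "nat \<Rightarrow> int" and E G :: "nat \<Rightarrow> nat"
  assumes "K \<ge> 1"
  shows "(totDeg (2*K) r c E G < 2 * int K ^ 2 - 3 * int K
            \<longrightarrow> det (Mmat t1 t2 (2*K) r c E G) = 0)
       \<and> ((totDeg (2*K) r c E G = 2 * int K ^ 2 - 3 * int K
             \<and> det (Mmat t1 t2 (2*K) r c E G) \<noteq> 0)
            \<longrightarrow> bij_betw (colDeg (2*K) r c E G) {0..<2*K} {-1 .. 2 * int K - 2})"
proof (cases "inj_on r {0..<2*K}")
  case True
  note k1 = key(1)[OF assms True] and k2 = key(2)[OF assms True]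
  show ?thesis
  proof (intro conjI impI)
    assume "totDeg (2*K) r c E G < 2 * int K ^ 2 - 3 * int K"
    then show "det (Mmat t1 t2 (2*K) r c E G) = 0" using k1 by fastforce
  next
    assume "totDeg (2*K) r c E G = 2 * int K ^ 2 - 3 * int K
             \<and> det (Mmat t1 t2 (2*K) r c E G) \<noteq> 0"
    then show "bij_betw (colDeg (2*K) r c E G) {0..<2*K} {-1 .. 2 * int K - 2}"
      using k2 by blast
  qed
next
  case False
  then obtain i j where ij: "i < 2*K" "j < 2*K" "i \<noteq> j" "r i = r j"
    unfolding inj_on_def by auto
  define M where "M = Mmat t1 t2 (2*K) r c E G"
  have Mc: "M \<in> carrier_mat (2*K) (2*K)" unfolding M_def Mmat_def by simp
  have "row M i = row M j"
    by (rule eq_vecI) (use ij in \<open>auto simp: M_def Mmat_def\<close>)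
  then have "det M = 0" by (rule det_identical_rows[OF Mc ij(3) ij(1) ij(2)])
  then show ?thesis unfolding M_def by simp
qed

end
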